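(* Let $\mathcal H$ be a finite multi-sorted relational structure and $p$ a prime. Then, up to isomorphism, there exists a unique $p$-rigid multi-sorted structure $\mathcal H^{*p}$ such that $\mathcal H\rightarrow_p^*\mathcal H^{*p}$.
   Context: A multi-sorted relational structure $\mathcal H$ over sorts $[k]$ consists of pairwise disjoint finite sets $H_1,\dots,H_k$ and finitely many relations, each relation symbol $\mathcal R$ having an arity $\ell$ and a type $(i_1,\dots,i_\ell)\in[k]^\ell$, interpreted as a subset of $H_{i_1}\times\dots\times H_{i_\ell}$. Similar structures have the same signature and types. A homomorphism $\varphi=\{\varphi_i\}_{i\in[k]}$, $\varphi_i:G_i\to H_i$, maps every tuple of each relation of $\mathcal G$ to a tuple of the corresponding relation of $\mathcal H$ (applying $\varphi_{i_j}$ in coordinate $j$); isomorphisms and automorphisms are defined as usual (bijective with homomorphic inverse). An automorphism $\pi=\{\pi_i\}$ has order $p$ if each $\pi_i$ is the identity or has order $p$, and at least one $\pi_i$ is not the identity. $\mathcal H$ is $p$-rigid if it has no automorphism of order $p$. For an automorphism $\pi$, $\mathcal H^\pi$ is the substructure of $\mathcal H$ induced by the sets $\mathrm{Fix}(\pi_i)=\{a\in H_i:\pi_i(a)=a\}$ (each relation intersected with the product of the fixed-point sets of the corresponding sorts). Write $\mathcal H\rightarrow_p\mathcal H'$ if there is an automorphism $\pi$ of $\mathcal H$ of order $p$ with $\mathcal H'\cong\mathcal H^\pi$, and $\mathcal H\rightarrow_p^*\mathcal H'$ if there are structures $\mathcal H_1\cong\mathcal H,\ \mathcal H_t\cong\mathcal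 H'$ with $\mathcal H_1\rightarrow_p\mathcal H_2\rightarrow_p\dots\rightarrow_p\mathcal H_t$. *)

theory Defs
  imports "HOL-Computational_Algebra.Primes"
begin

text \<open>The signature is fixed by a number of sorts
  k (sorts are 0,...,k-1) and a list sig of relation types; relation j has type sig!j
  (a list of sorts), and its arity is length (sig!j).  A structure gives a universe
  msort H i for each sort i, and the interpretation mrel H j of each relation symbol j
  as a set of tuples (lists).\<close>

record 'a mstruct =
  msort :: "nat \<Rightarrow> 'a set"
  mrel  :: "nat \<Rightarrow> 'a list set"

definition sig_ok :: "nat \<Rightarrow> nat list list \<Rightarrow> bool" where
  "sig_ok k sig \<longleftrightarrow> (\<forall>ty\<in>set sig. \<forall>i\<in>set ty. i < k)"

definition tuples_of :: "('a mstruct) \<Rightarrow> nat list \<Rightarrow> 'a list set" where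
  "tuples_of H ty = {xs. length xs = length ty \<and> (\<forall>t<length xs. xs ! t \<in> msort H (ty ! t))}"

definition mwf :: "nat \<Rightarrow> nat list list \<Rightarrow> 'a mstruct \<Rightarrow> bool" where
  "mwf k sig H \<longleftrightarrow>
     (\<forall>i<k. finite (msort H i)) \<and>
     (\<forall>i<k. \<forall>i'<k. i \<noteq> i' \<longrightarrow> msort H i \<inter> msort H i' = {}) \<and>
     (\<forall>j<length sig. mrel H j \<subseteq> tuples_of H (sig ! j))"

definition app_tuple :: "(nat \<Rightarrow> 'a \<Rightarrow> 'b) \<Rightarrow> nat list \<Rightarrow> 'a list \<Rightarrow> 'b list" where
  "app_tuple \<phi> ty xs = map (\<lambda>t. \<phi> (ty ! t) (xs ! t)) [0..<length xs]"

definition mhom :: "nat \<Rightarrow> nat list list \<Rightarrow> 'a mstruct \<Rightarrow> 'b mstruct \<Rightarrow> (nat \<Rightarrow> 'a \<Rightarrow> 'b) \<Rightarrow> bool" where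
  "mhom k sig G H \<phi> \<longleftrightarrow>
     (\<forall>i<k. \<forall>a\<in>msort G i. \<phi> i a \<in> msort H i) \<and>
     (\<forall>j<length sig. \<forall>xs\<in>mrel G j. app_tuple \<phi> (sig ! j) xs \<in> mrel H j)"

definition miso_via :: "nat \<Rightarrow> nat list list \<Rightarrow> 'a mstruct \<Rightarrow> 'b mstruct \<Rightarrow> (nat \<Rightarrow> 'a \<Rightarrow> 'b) \<Rightarrow> bool" where
  "miso_via k sig G H \<phi> \<longleftrightarrow>
     mhom k sig G H \<phi> \<and>
     (\<forall>i<k. bij_betw (\<phi> i) (msort G i) (msort H i)) \<and>
     mhom k sig H G (\<lambda>i. inv_into (msort G i) (\<phi> i))"

definition miso :: "nat \<Rightarrow> nat list list \<Rightarrow> 'a mstruct \<Rightarrow> 'b mstruct \<Rightarrow> bool" where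
  "miso k sig G H \<longleftrightarrow> (\<exists>\<phi>. miso_via k sig G H \<phi>)"

definition mauto :: "nat \<Rightarrow> nat list list \<Rightarrow> 'a mstruct \<Rightarrow> (nat \<Rightarrow> 'a \<Rightarrow> 'a) \<Rightarrow> bool" where
  "mauto k sig H \<pi> \<longleftrightarrow> miso_via k sig H H \<pi>"

definition is_id_on :: "('a \<Rightarrow> 'a) \<Rightarrow> 'a set \<Rightarrow> bool" where
  "is_id_on f A \<longleftrightarrow> (\<forall>a\<in>A. f a = a)"

definition perm_order_on :: "('a \<Rightarrow> 'a) \<Rightarrow> 'a set \<Rightarrow> nat" where
  "perm_order_on f A = (LEAST n. 0 < n \<and> is_id_on (f ^^ n) A)"

definition mauto_order :: "nat \<Rightarrow> nat list list \<Rightarrow> nat \<Rightarrow> 'a mstruct \<Rightarrow> (nat \<Rightarrow> 'a \<Rightarrow> 'a) \<Rightarrow> bool" where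
  "mauto_order k sig p H \<pi> \<longleftrightarrow>
     mauto k sig H \<pi> \<and>
     (\<forall>i<k. is_id_on (\<pi> i) (msort H i) \<or> perm_order_on (\<pi> i) (msort H i) = p) \<and>
     (\<exists>i<k. \<not> is_id_on (\<pi> i) (msort H i))"

definition p_rigid :: "nat \<Rightarrow> nat list list \<Rightarrow> nat \<Rightarrow> 'a mstruct \<Rightarrow> bool" where
  "p_rigid k sig p H \<longleftrightarrow> \<not> (\<exists>\<pi>. mauto_order k sig p H \<pi>)"

definition fix_sub :: "nat \<Rightarrow> nat list list \<Rightarrow> 'a mstruct \<Rightarrow> (nat \<Rightarrow> 'a \<Rightarrow> 'a) \<Rightarrow> 'a mstruct" where
  "fix_sub k sig H \<pi> =
     (let S = (\<lambda>i. if i < k then {a \<in> msort H i. \<pi> i a = a} else msort H i) in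
      \<lparr> msort = S,
        mrel = (\<lambda>j. if j < length sig
                    then {xs \<in> mrel H j. \<forall>t<length xs. xs ! t \<in> S (sig ! j ! t)}
                    else mrel H j) \<rparr>)"

definition pstep :: "nat \<Rightarrow> nat list list \<Rightarrow> nat \<Rightarrow> 'a mstruct \<Rightarrow> 'b mstruct \<Rightarrow> bool" where
  "pstep k sig p H H' \<longleftrightarrow> (\<exists>\<pi>. mauto_order k sig p H \<pi> \<and> miso k sig H' (fix_sub k sig H \<pi>))"

text \<open>The intermediate structures are taken over the element type of H.\<close>
definition preach :: "nat \<Rightarrow> nat list list \<Rightarrow> nat \<Rightarrow> 'a mstruct \<Rightarrow> 'b mstruct \<Rightarrow> bool" where
  "preach k sig p H H' \<longleftrightarrow>
     (\<exists>hs :: 'a mstruct list. hs \<noteq> [] \<and> (\<forall>G\<in>set hs. mwf k sig G) \<and>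
        miso k sig (hd hs) H \<and> miso k sig (last hs) H' \<and>
        (\<forall>i. Suc i < length hs \<longrightarrow> pstep k sig p (hs ! i) (hs ! Suc i)))"

end

theory Submission
  imports Defs "HOL-Algebra.Sylow" "HOL-Algebra.Multiplicative_Group"
begin


lemma period_lemma:
  fixes Q :: "nat \<Rightarrow> bool"
  assumes p: "prime p" and Qp: "Q p" and n1: "\<not> Q 1"
    and hadd': "\<forall>a b. Q a \<longrightarrow> Q b \<longrightarrow> Q (a+b)"
    and hcanc': "\<forall>a b. Q a \<longrightarrow> Q (a+b) \<longrightarrow> Q b"
  shows "\<forall>j. 0<j \<and> j<p \<longrightarrow> \<not> Q j"
proof (intro allI impI notI)
  fix j assume j': "0<j \<and> j<p" "Q j"
  have hadd: "\<And>a b. Q a \<Longrightarrow> Q b \<Longrightarrow> Q (a+b)" using hadd' by blast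
  have hcanc: "\<And>a b. Q a \<Longrightarrow> Q (a+b) \<Longrightarrow> Q b" using hcanc' by blast
  have j: "0<j" "j<p" "Q j" using j' by auto
  define d where "d = (LEAST n. 0 < n \<and> Q n)"
  have d: "0 < d \<and> Q d" unfolding d_def by (rule LeastI[of _ j]) (use j in auto)
  have dj: "d \<le> j" unfolding d_def by (rule Least_le) (use j in auto)
  have Q0: "Q 0" using hcanc[of p 0] Qp by simp
  have Qm: "Q (d*q)" for q by (induction q) (use Q0 d hadd in \<open>auto simp: add.commute\<close>)
  have "p = d*(p div d) + p mod d" by simp
  hence "Q (p mod d)" using hcanc[of "d*(p div d)" "p mod d"] Qm Qp by metis
  moreover have "p mod d < d" using d by simp
  ultimately have "p mod d = 0"
    using Least_le[of "\<lambda>n. 0 < n \<and> Q n" "p mod d"] unfolding d_def[symmetric] by fastforce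
  hence "d dvd p" by auto
  hence "d = 1 \<or> d = p" using p prime_nat_iff by auto
  thus False using d dj j n1 by auto
qed

lemma period_least:
  fixes Q :: "nat \<Rightarrow> bool"
  assumes p: "prime p" and Qp: "Q p" and n1: "\<not> Q 1"
    and hadd': "\<forall>a b. Q a \<longrightarrow> Q b \<longrightarrow> Q (a+b)"
    and hcanc': "\<forall>a b. Q a \<longrightarrow> Q (a+b) \<longrightarrow> Q b"
  shows "(LEAST n. 0 < n \<and> Q n) = p"
proof (rule Least_equality)
  show "0 < p \<and> Q p" using p Qp prime_gt_0_nat by auto
  fix y assume "0 < y \<and> Q y"
  thus "p \<le> y" using period_lemma[OF p Qp n1 hadd' hcanc'] by (meson not_le)
qed

lemma funpow_mod:
  assumes "(f^^p) y = y"
  shows "(f^^n) y = (f^^(n mod p)) y"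
proof -
  have m: "(f^^(p*q)) y = y" for q
    by (induction q) (auto simp: funpow_add assms simp del: funpow.simps)
  have "n = n mod p + p*(n div p)" by simp
  hence "(f^^n) y = (f^^(n mod p)) ((f^^(p*(n div p))) y)"
    by (metis funpow_add o_apply)
  thus ?thesis using m by simp
qed

lemma orbit_dvd:
  assumes "finite Y" "f ` Y \<subseteq> Y" "\<forall>y\<in>Y. (f^^p) y = y \<and> f y \<noteq> y" "prime p"
  shows "p dvd card Y"
  using assms
proof (induction Y rule: finite_psubset_induct)
  case (psubset Y)
  show ?case
  proof (cases "Y = {}")
    case True thus ?thesis by simp
  next
    case False
    then obtain y where y: "y \<in> Y" by auto
    have p0: "0 < p" using psubset prime_gt_0_nat by auto
    have inY: "(f^^j) z \<in> Y" if "z \<in> Y" for j z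
      using that psubset(3) by (induction j) auto
    have nofix: "(f^^j) z \<noteq> z" if "z \<in> Y" "0<j" "j<p" for z j
    proof -
      have a1: "\<forall>a b. (f^^a) z = z \<longrightarrow> (f^^b) z = z \<longrightarrow> (f^^(a+b)) z = z"
        by (simp add: funpow_add)
      have a2: "\<forall>a b. (f^^a) z = z \<longrightarrow> (f^^(a+b)) z = z \<longrightarrow> (f^^b) z = z"
        by (metis add.commute comp_apply funpow_add)
      have "(f^^p) z = z" "(f^^1) z \<noteq> z" using psubset(4) that by auto
      from period_lemma[of p "\<lambda>n. (f^^n) z = z", OF psubset(5) this a1 a2]
      show ?thesis using that by auto
    qed
    define Orb where "Orb = (\<lambda>j. (f^^j) y) ` {..<p}"
    have injO: "inj_on (\<lambda>j. (f^^j) y) {..<p}"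
    proof (rule inj_onI)
      fix i j assume ij: "i \<in> {..<p}" "j \<in> {..<p}" "(f^^i) y = (f^^j) y"
      show "i = j"
      proof (rule ccontr)
        assume "i \<noteq> j"
        then consider "i < j" | "j < i" by linarith
        thus False
        proof cases
          case 1
          have e: "(f^^(j-i)) ((f^^i) y) = (f^^i) y" using ij 1
            by (metis funpow_add le_add_diff_inverse2 less_imp_le o_apply)
          have "0 < j-i" "j-i < p" using ij 1 by auto
          from nofix[OF inY[OF y] this] e show False by contradiction
        next
          case 2
          have e: "(f^^(i-j)) ((f^^j) y) = (f^^j) y" using ij 2
            by (metis funpow_add le_add_diff_inverse2 less_imp_le o_apply)
          have "0 < i-j" "i-j < p" using ij 2 by auto
          from nofix[OF inY[OF y] this] e show False by contradiction
        qed
      qed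
    qed
    have cOrb: "card Orb = p" unfolding Orb_def using card_image[OF injO] by simp
    have OY: "Orb \<subseteq> Y" unfolding Orb_def using inY y by auto
    have yO: "y \<in> Orb" unfolding Orb_def using p0 by (auto intro: image_eqI[of _ _ 0])
    have cl: "f ` (Y - Orb) \<subseteq> Y - Orb"
    proof
      fix w assume "w \<in> f ` (Y - Orb)"
      then obtain z where z: "z \<in> Y" "z \<notin> Orb" "w = f z" by auto
      have "w \<in> Y" using z psubset(3) by auto
      moreover have "w \<notin> Orb"
      proof
        assume "w \<in> Orb"
        then obtain j where j: "j < p" "w = (f^^j) y" unfolding Orb_def by auto
        have "z = (f^^p) z" using psubset(4) z by auto
        also have "\<dots> = (f^^(p-1)) (f z)" using p0
          by (metis Suc_diff_1 funpow_Suc_right o_apply)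
        also have "\<dots> = (f^^(p-1)) ((f^^j) y)" using z j by simp
        also have "\<dots> = (f^^(p-1+j)) y" by (simp only: funpow_add o_apply)
        also have "\<dots> = (f^^((p-1+j) mod p)) y" using funpow_mod[where f=f and p=p and y=y] psubset(4) y by blast
        finally have "z \<in> Orb" unfolding Orb_def using p0 by auto
        thus False using z by simp
      qed
      ultimately show "w \<in> Y - Orb" by simp
    qed
    have "p dvd card (Y - Orb)"
    proof (rule psubset(2)[of "Y - Orb"])
      show "Y - Orb \<subset> Y" using yO y by auto
      show "f ` (Y - Orb) \<subseteq> Y - Orb" by (rule cl)
      show "\<forall>y\<in>Y - Orb. (f ^^ p) y = y \<and> f y \<noteq> y" using psubset(4) by blast
      show "prime p" by (rule psubset(5))
    qed
    moreover have "card Y = card Orb + card (Y - Orb)"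
      using card_Diff_subset[OF finite_subset[OF OY psubset(1)] OY] card_mono[OF psubset(1) OY]
      by simp
    ultimately show ?thesis using cOrb by simp
  qed
qed

lemma orbit_mod:
  assumes "finite X" "f ` X \<subseteq> X" "\<forall>x\<in>X. (f^^p) x = x" "prime p"
  shows "card X mod p = card {x\<in>X. f x = x} mod p"
proof -
  let ?Y = "{x\<in>X. f x \<noteq> x}"
  have p0: "0 < p" using assms(4) prime_gt_0_nat by blast
  then obtain q where q: "p = Suc q" using gr0_implies_Suc by blast
  have "f ` ?Y \<subseteq> ?Y"
  proof
    fix w assume "w \<in> f ` ?Y"
    then obtain x where x: "x \<in> X" "f x \<noteq> x" "w = f x" by auto
    have "f w \<noteq> w"
    proof
      assume fw: "f w = w"
      have "(f^^n) w = w" for n by (induction n) (use fw in auto)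
      hence "(f^^q) (f x) = f x" using x by simp
      hence "(f^^p) x = f x" unfolding q by (simp only: funpow_Suc_right o_apply)
      thus False using assms(3) x by auto
    qed
    thus "w \<in> ?Y" using x assms(2) by auto
  qed
  moreover have "finite ?Y" using assms(1) by simp
  moreover have "\<forall>y\<in>?Y. (f^^p) y = y \<and> f y \<noteq> y" using assms(3) by blast
  ultimately have "p dvd card ?Y" using orbit_dvd[of ?Y f p] assms(4) by blast
  moreover have "card X = card {x\<in>X. f x = x} + card ?Y"
  proof -
    have "X = {x\<in>X. f x = x} \<union> ?Y" by auto
    hence "card X = card ({x\<in>X. f x = x} \<union> ?Y)" by simp
    also have "\<dots> = card {x\<in>X. f x = x} + card ?Y"
      by (rule card_Un_disjoint) (use assms(1) in auto)
    finally show ?thesis .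
  qed
  ultimately show ?thesis by (auto elim!: dvdE)
qed

lemma perm_finite_order:
  assumes "bij_betw f A A" "finite A"
  shows "\<exists>n>0. is_id_on (f^^n) A"
proof -
  let ?g = "\<lambda>n. restrict (f^^n) A"
  have fm: "(f^^n) x \<in> A" if "x \<in> A" for n x
    using that assms(1) by (induction n) (auto simp: bij_betw_def)
  have "range ?g \<subseteq> PiE A (\<lambda>_. A)" using fm by auto
  moreover have "finite (PiE A (\<lambda>_. A))" using assms(2) by (simp add: finite_PiE)
  ultimately have "finite (range ?g)" by (rule finite_subset)
  hence "\<not> inj ?g" using finite_imageD infinite_UNIV_nat by blast
  then obtain i' j' where ij': "i' \<noteq> j'" "?g i' = ?g j'" unfolding inj_on_def by blast
  obtain i j where ij: "i < j" "?g i = ?g j"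
  proof (cases "i' < j'")
    case True thus ?thesis using that ij' by blast
  next
    case False hence "j' < i'" using ij' by simp
    thus ?thesis using that ij' by metis
  qed
  have "is_id_on (f^^(j-i)) A"
    unfolding is_id_on_def
  proof
    fix x assume x: "x \<in> A"
    have "bij_betw (f^^i) A A" using assms(1) by (rule bij_betw_funpow)
    then obtain w where w: "w \<in> A" "x = (f^^i) w" using x unfolding bij_betw_def by blast
    have "(f^^i) w = (f^^j) w" using fun_cong[OF ij(2), of w] w(1) by simp
    also have "j = (j-i) + i" using ij(1) by simp
    hence "(f^^j) w = (f^^(j-i)) ((f^^i) w)"
      by (metis funpow_add o_apply)
    finally show "(f^^(j-i)) x = x" using w by simp
  qed
  moreover have "0 < j - i" using ij by simp
  ultimately show ?thesis by blast
qed



definition ihoms :: "nat \<Rightarrow> nat list list \<Rightarrow> 'b mstruct \<Rightarrow> 'a mstruct \<Rightarrow> (nat \<Rightarrow> 'b \<Rightarrow> 'a) set" where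
  "ihoms k sig G H = {\<phi> \<in> PiE {..<k} (\<lambda>i. PiE (msort G i) (\<lambda>a. msort H i)).
      mhom k sig G H \<phi> \<and> (\<forall>i<k. inj_on (\<phi> i) (msort G i))}"

definition rcomp :: "nat \<Rightarrow> 'b mstruct \<Rightarrow> (nat \<Rightarrow> 'c \<Rightarrow> 'd) \<Rightarrow> (nat \<Rightarrow> 'b \<Rightarrow> 'c) \<Rightarrow> nat \<Rightarrow> 'b \<Rightarrow> 'd" where
  "rcomp k G \<psi> \<phi> = (\<lambda>i\<in>{..<k}. \<lambda>a\<in>msort G i. \<psi> i (\<phi> i a))"

lemma app_tuple_length [simp]: "length (app_tuple \<phi> ty xs) = length xs"
  by (simp add: app_tuple_def)

lemma app_tuple_nth [simp]: "t < length xs \<Longrightarrow> app_tuple \<phi> ty xs ! t = \<phi> (ty ! t) (xs ! t)"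
  by (simp add: app_tuple_def)

lemma app_tuple_cong:
  "(\<And>t. t < length xs \<Longrightarrow> \<phi> (ty!t) (xs!t) = \<psi> (ty!t) (xs!t)) \<Longrightarrow> app_tuple \<phi> ty xs = app_tuple \<psi> ty xs"
  by (simp add: app_tuple_def)

lemma app_tuple_comp:
  "app_tuple \<psi> ty (app_tuple \<phi> ty xs) = app_tuple (\<lambda>i a. \<psi> i (\<phi> i a)) ty xs"
  by (rule nth_equalityI) auto

lemma rcomp_apply [simp]:
  "i < k \<Longrightarrow> a \<in> msort G i \<Longrightarrow> rcomp k G \<psi> \<phi> i a = \<psi> i (\<phi> i a)"
  by (simp add: rcomp_def)

lemma ihoms_PiE: "\<phi> \<in> ihoms k sig G H \<Longrightarrow> \<phi> \<in> PiE {..<k} (\<lambda>i. PiE (msort G i) (\<lambda>a. msort H i))"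
  by (simp add: ihoms_def)

lemma PiE2_maps: "\<phi> \<in> PiE {..<k} (\<lambda>i. PiE (msort G i) (\<lambda>a. B i)) \<Longrightarrow> i < k \<Longrightarrow> a \<in> msort G i \<Longrightarrow> \<phi> i a \<in> B i"
  by (auto simp: PiE_iff)

lemma ihoms_maps: "\<phi> \<in> ihoms k sig G H \<Longrightarrow> i < k \<Longrightarrow> a \<in> msort G i \<Longrightarrow> \<phi> i a \<in> msort H i"
  by (auto simp: ihoms_def PiE_iff)

lemma ihoms_ext:
  assumes "\<phi> \<in> ihoms k sig G H" "\<psi> \<in> ihoms k sig G H'"
    and "\<And>i a. i < k \<Longrightarrow> a \<in> msort G i \<Longrightarrow> \<phi> i a = \<psi> i a"
  shows "\<phi> = \<psi>"
proof (rule ext, rule ext)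
  fix i a
  have P: "\<phi> \<in> PiE {..<k} (\<lambda>i. PiE (msort G i) (\<lambda>a. msort H i))"
          "\<psi> \<in> PiE {..<k} (\<lambda>i. PiE (msort G i) (\<lambda>a. msort H' i))"
    using assms(1,2) by (auto simp: ihoms_def)
  show "\<phi> i a = \<psi> i a"
  proof (cases "i < k")
    case False thus ?thesis using P by (auto simp: PiE_def extensional_def)
  next
    case True
    show ?thesis
    proof (cases "a \<in> msort G i")
      case True thus ?thesis using assms(3) \<open>i<k\<close> by auto
    next
      case False
      have "\<phi> i \<in> extensional (msort G i)" "\<psi> i \<in> extensional (msort G i)"
        using P \<open>i<k\<close> by (auto simp: PiE_def Pi_def)
      thus ?thesis using False by (auto simp: extensional_def)
    qed
  qed
qed

lemma rcomp_PiE: "rcomp k G \<psi> \<phi> \<in> PiE {..<k} (\<lambda>i. PiE (msort G i) (\<lambda>a. B i))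
   \<longleftrightarrow> (\<forall>i<k. \<forall>a\<in>msort G i. \<psi> i (\<phi> i a) \<in> B i)"
  by (auto simp: rcomp_def PiE_def Pi_def extensional_def)

context
  fixes k :: nat and sig :: "nat list list"
  assumes SO: "sig_ok k sig"
begin

lemma tup_coord:
  assumes "mwf k sig G" "j < length sig" "xs \<in> mrel G j" "t < length xs"
  shows "sig!j!t < k" "xs!t \<in> msort G (sig!j!t)" "length xs = length (sig!j)"
proof -
  have "xs \<in> tuples_of G (sig!j)" using assms unfolding mwf_def by auto
  hence L: "length xs = length (sig!j)" and M: "xs!t \<in> msort G (sig!j!t)"
    using assms(4) unfolding tuples_of_def by auto
  show "xs!t \<in> msort G (sig!j!t)" "length xs = length (sig!j)" using L M by auto
  have "sig!j \<in> set sig" using assms(2) by simp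
  moreover have "sig!j!t \<in> set (sig!j)" using L assms(4) by simp
  ultimately show "sig!j!t < k" using SO unfolding sig_ok_def by blast
qed

lemma mhom_cong:
  assumes "mwf k sig G" "\<And>i a. i<k \<Longrightarrow> a\<in>msort G i \<Longrightarrow> \<phi> i a = \<psi> i a"
    and "mhom k sig G H \<phi>"
  shows "mhom k sig G H \<psi>"
  unfolding mhom_def
proof (intro conjI allI impI ballI)
  fix i a assume "i<k" "a \<in> msort G i"
  thus "\<psi> i a \<in> msort H i" using assms by (metis mhom_def)
next
  fix j xs assume j: "j < length sig" "xs \<in> mrel G j"
  have "app_tuple \<phi> (sig!j) xs = app_tuple \<psi> (sig!j) xs"
    by (rule app_tuple_cong) (use tup_coord[OF assms(1) j] assms(2) in auto)
  thus "app_tuple \<psi> (sig ! j) xs \<in> mrel H j" using assms(3) j unfolding mhom_def by metis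
qed

lemma mhom_comp:
  assumes "mwf k sig G" "mhom k sig G A \<phi>" "mhom k sig A B \<psi>"
  shows "mhom k sig G B (rcomp k G \<psi> \<phi>)"
proof -
  have "mhom k sig G B (\<lambda>i a. \<psi> i (\<phi> i a))"
    using assms(2,3) unfolding mhom_def by (auto simp: app_tuple_comp[symmetric])
  thus ?thesis by (rule mhom_cong[OF assms(1), rotated]) simp
qed

lemma ihoms_comp:
  assumes "mwf k sig G" "\<phi> \<in> ihoms k sig G A" "mhom k sig A B \<psi>" "\<forall>i<k. inj_on (\<psi> i) (msort A i)"
  shows "rcomp k G \<psi> \<phi> \<in> ihoms k sig G B"
proof -
  have P: "\<phi> \<in> PiE {..<k} (\<lambda>i. PiE (msort G i) (\<lambda>a. msort A i))" "mhom k sig G A \<phi>"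
     "\<forall>i<k. inj_on (\<phi> i) (msort G i)"
    using assms(2) by (auto simp: ihoms_def)
  have m: "\<psi> i b \<in> msort B i" if "i<k" "b \<in> msort A i" for i b
    using assms(3) that unfolding mhom_def by auto
  have "rcomp k G \<psi> \<phi> \<in> PiE {..<k} (\<lambda>i. PiE (msort G i) (\<lambda>a. msort B i))"
    unfolding rcomp_PiE using PiE2_maps[OF P(1)] m by blast
  moreover have "mhom k sig G B (rcomp k G \<psi> \<phi>)" by (rule mhom_comp[OF assms(1) P(2) assms(3)])
  moreover have "inj_on (rcomp k G \<psi> \<phi> i) (msort G i)" if "i<k" for i
  proof -
    have im: "\<phi> i ` msort G i \<subseteq> msort A i" using PiE2_maps[OF P(1) that] by blast
    have i1: "inj_on (\<phi> i) (msort G i)" using P(3) that by blast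
    have i2: "inj_on (\<psi> i) (\<phi> i ` msort G i)"
      by (rule inj_on_subset[OF _ im]) (use assms(4) that in blast)
    have "inj_on (\<psi> i \<circ> \<phi> i) (msort G i)" by (rule comp_inj_on[OF i1 i2])
    hence "inj_on (\<lambda>a. \<psi> i (\<phi> i a)) (msort G i)" by (simp add: comp_def)
    thus ?thesis by (rule inj_on_cong[THEN iffD1, rotated]) (simp add: that)
  qed
  ultimately show ?thesis by (simp add: ihoms_def)
qed

end


lemma fix_sort: "msort (fix_sub k sig H \<pi>) i = (if i < k then {a \<in> msort H i. \<pi> i a = a} else msort H i)"
  by (simp add: fix_sub_def Let_def)

lemma fix_rel: "mrel (fix_sub k sig H \<pi>) j = (if j < length sig
   then {xs \<in> mrel H j. \<forall>t<length xs. xs ! t \<in> msort (fix_sub k sig H \<pi>) (sig ! j ! t)} else mrel H j)"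
  by (simp add: fix_sub_def Let_def)

lemma finite_ihoms:
  assumes "mwf k sig G" "mwf k sig H"
  shows "finite (ihoms k sig G H)"
proof -
  have "finite (PiE {..<k} (\<lambda>i. PiE (msort G i) (\<lambda>a. msort H i)))"
    using assms unfolding mwf_def by (intro finite_PiE) auto
  thus ?thesis unfolding ihoms_def by (rule finite_subset[rotated]) auto
qed


definition autG :: "nat \<Rightarrow> nat list list \<Rightarrow> 'a mstruct \<Rightarrow> (nat \<Rightarrow> 'a \<Rightarrow> 'a) monoid" where
  "autG k sig H = \<lparr>carrier = ihoms k sig H H, monoid.mult = (\<lambda>x y. rcomp k H x y),
     one = (\<lambda>i\<in>{..<k}. \<lambda>a\<in>msort H i. a)\<rparr>"

context
  fixes k :: nat and sig :: "nat list list"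
  assumes SO: "sig_ok k sig"
begin

lemma card_ihoms_iso:
  assumes G: "mwf k sig G" and iso: "miso_via k sig A B \<psi>"
  shows "card (ihoms k sig G A) = card (ihoms k sig G B)"
proof -
  define \<chi> where "\<chi> = (\<lambda>i. inv_into (msort A i) (\<psi> i))"
  have hom: "mhom k sig A B \<psi>" and bij: "\<And>i. i<k \<Longrightarrow> bij_betw (\<psi> i) (msort A i) (msort B i)"
    and homi: "mhom k sig B A \<chi>" using iso unfolding miso_via_def \<chi>_def by auto
  have injA: "\<forall>i<k. inj_on (\<psi> i) (msort A i)" using bij bij_betw_def by blast
  have injB: "\<forall>i<k. inj_on (\<chi> i) (msort B i)" unfolding \<chi>_def
    using bij by (metis bij_betw_def inj_on_inv_into order_refl)
  have lf: "\<chi> i (\<psi> i a) = a" if "i<k" "a \<in> msort A i" for i a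
    unfolding \<chi>_def using bij[OF that(1)] that(2) by (simp add: bij_betw_def inv_into_f_f)
  have rf: "\<psi> i (\<chi> i b) = b" if "i<k" "b \<in> msort B i" for i b
    unfolding \<chi>_def using bij[OF that(1)] that(2) by (simp add: bij_betw_def f_inv_into_f)
  have "bij_betw (rcomp k G \<psi>) (ihoms k sig G A) (ihoms k sig G B)"
  proof (rule bij_betw_byWitness[where f'="rcomp k G \<chi>"])
    show "\<forall>\<phi>\<in>ihoms k sig G A. rcomp k G \<chi> (rcomp k G \<psi> \<phi>) = \<phi>"
    proof
      fix \<phi> assume \<phi>: "\<phi> \<in> ihoms k sig G A"
      have c: "rcomp k G \<chi> (rcomp k G \<psi> \<phi>) \<in> ihoms k sig G A"
        by (rule ihoms_comp[OF SO G ihoms_comp[OF SO G \<phi> hom injA] homi injB])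
      show "rcomp k G \<chi> (rcomp k G \<psi> \<phi>) = \<phi>"
        by (rule ihoms_ext[OF c \<phi>]) (simp add: lf ihoms_maps[OF \<phi>])
    qed
    show "\<forall>\<phi>\<in>ihoms k sig G B. rcomp k G \<psi> (rcomp k G \<chi> \<phi>) = \<phi>"
    proof
      fix \<phi> assume \<phi>: "\<phi> \<in> ihoms k sig G B"
      have c: "rcomp k G \<psi> (rcomp k G \<chi> \<phi>) \<in> ihoms k sig G B"
        by (rule ihoms_comp[OF SO G ihoms_comp[OF SO G \<phi> homi injB] hom injA])
      show "rcomp k G \<psi> (rcomp k G \<chi> \<phi>) = \<phi>"
        by (rule ihoms_ext[OF c \<phi>]) (simp add: rf ihoms_maps[OF \<phi>])
    qed
    show "rcomp k G \<psi> ` ihoms k sig G A \<subseteq> ihoms k sig G B"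
      using ihoms_comp[OF SO G _ hom injA] by blast
    show "rcomp k G \<chi> ` ihoms k sig G B \<subseteq> ihoms k sig G A"
      using ihoms_comp[OF SO G _ homi injB] by blast
  qed
  thus ?thesis by (rule bij_betw_same_card)
qed

lemma mwf_fix_sub:
  assumes "mwf k sig H"
  shows "mwf k sig (fix_sub k sig H \<pi>)"
  unfolding mwf_def
proof (intro conjI allI impI)
  fix i assume "i < k"
  thus "finite (msort (fix_sub k sig H \<pi>) i)" using assms unfolding mwf_def fix_sort by auto
next
  fix i i' assume "i<k" "i'<k" "i \<noteq> i'"
  thus "msort (fix_sub k sig H \<pi>) i \<inter> msort (fix_sub k sig H \<pi>) i' = {}"
    using assms unfolding mwf_def fix_sort by auto
next
  fix j assume j: "j < length sig"
  show "mrel (fix_sub k sig H \<pi>) j \<subseteq> tuples_of (fix_sub k sig H \<pi>) (sig ! j)"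
  proof
    fix xs assume xs: "xs \<in> mrel (fix_sub k sig H \<pi>) j"
    have X: "xs \<in> {xs \<in> mrel H j. \<forall>t<length xs. xs ! t \<in> msort (fix_sub k sig H \<pi>) (sig ! j ! t)}"
      using xs j by (subst (asm) fix_rel) simp
    hence xs': "xs \<in> mrel H j" "\<forall>t<length xs. xs ! t \<in> msort (fix_sub k sig H \<pi>) (sig ! j ! t)"
      by auto
    thus "xs \<in> tuples_of (fix_sub k sig H \<pi>) (sig ! j)"
    proof -
      have "xs \<in> tuples_of H (sig!j)" using assms j xs'(1) unfolding mwf_def by blast
      thus ?thesis using xs'(2) unfolding tuples_of_def by auto
    qed
  qed
qed


lemma auto_pow_id:
  assumes H: "mwf k sig H" and A: "mauto_order k sig p H \<pi>" and i: "i<k" and a: "a \<in> msort H i"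
  shows "(\<pi> i ^^ p) a = a"
proof -
  have bij: "bij_betw (\<pi> i) (msort H i) (msort H i)"
    using A i unfolding mauto_order_def mauto_def miso_via_def by blast
  have fin: "finite (msort H i)" using H i unfolding mwf_def by blast
  have "is_id_on (\<pi> i) (msort H i) \<or> perm_order_on (\<pi> i) (msort H i) = p"
    using A i unfolding mauto_order_def by blast
  thus ?thesis
  proof
    assume idd: "is_id_on (\<pi> i) (msort H i)"
    have "(\<pi> i ^^ n) a = a" for n by (induction n) (use idd a in \<open>auto simp: is_id_on_def\<close>)
    thus ?thesis .
  next
    assume po: "perm_order_on (\<pi> i) (msort H i) = p"
    have "\<exists>n. 0 < n \<and> is_id_on (\<pi> i ^^ n) (msort H i)" using perm_finite_order[OF bij fin] by blast
    from LeastI_ex[OF this] have "is_id_on (\<pi> i ^^ p) (msort H i)"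
      using po unfolding perm_order_on_def by simp
    thus ?thesis using a unfolding is_id_on_def by blast
  qed
qed

lemma card_ihoms_fix:
  assumes G: "mwf k sig G" and H: "mwf k sig H" and p: "prime p" and A: "mauto_order k sig p H \<pi>"
  shows "card (ihoms k sig G H) mod p = card (ihoms k sig G (fix_sub k sig H \<pi>)) mod p"
proof -
  let ?X = "ihoms k sig G H"
  let ?F = "rcomp k G \<pi>"
  have hom: "mhom k sig H H \<pi>" and inj: "\<forall>i<k. inj_on (\<pi> i) (msort H i)"
    using A unfolding mauto_order_def mauto_def miso_via_def bij_betw_def by auto
  have cl: "?F ` ?X \<subseteq> ?X" using ihoms_comp[OF SO G _ hom inj] by blast
  have pw: "(?F^^n) \<phi> \<in> ?X \<and> (\<forall>i<k. \<forall>a\<in>msort G i. (?F^^n) \<phi> i a = (\<pi> i ^^ n) (\<phi> i a))"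
    if "\<phi> \<in> ?X" for \<phi> n
  proof (induction n)
    case 0 thus ?case using that by simp
  next
    case (Suc n)
    have "(?F^^Suc n) \<phi> = ?F ((?F^^n) \<phi>)" by simp
    thus ?case using Suc cl by auto
  qed
  have per: "(?F^^p) \<phi> = \<phi>" if "\<phi> \<in> ?X" for \<phi>
    by (rule ihoms_ext[OF conjunct1[OF pw[OF that]] that])
       (simp add: pw[OF that] auto_pow_id[OF H A] ihoms_maps[OF that])
  have fixset: "{\<phi>\<in>?X. ?F \<phi> = \<phi>} = ihoms k sig G (fix_sub k sig H \<pi>)"
  proof (intro equalityI subsetI)
    fix \<phi> assume "\<phi> \<in> {\<phi>\<in>?X. ?F \<phi> = \<phi>}"
    hence \<phi>: "\<phi> \<in> ?X" and fx: "?F \<phi> = \<phi>" by auto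
    have fixed: "\<pi> i (\<phi> i a) = \<phi> i a" if "i<k" "a \<in> msort G i" for i a
      using fun_cong[OF fun_cong[OF fx, of i], of a] that by simp
    have mH: "\<phi> i a \<in> msort H i" if "i<k" "a \<in> msort G i" for i a
      using ihoms_maps[OF \<phi> that] .
    have P: "\<phi> \<in> PiE {..<k} (\<lambda>i. PiE (msort G i) (\<lambda>a. msort H i))"
      using \<phi> by (simp add: ihoms_def)
    have P': "\<phi> \<in> PiE {..<k} (\<lambda>i. PiE (msort G i) (\<lambda>a. msort (fix_sub k sig H \<pi>) i))"
      using P fixed mH by (auto simp: PiE_iff fix_sort)
    have hm: "mhom k sig G (fix_sub k sig H \<pi>) \<phi>"
      unfolding mhom_def
    proof (intro conjI allI impI ballI)
      fix i a assume "i<k" "a \<in> msort G i"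
      thus "\<phi> i a \<in> msort (fix_sub k sig H \<pi>) i" using fixed mH by (simp add: fix_sort)
    next
      fix j xs assume j: "j < length sig" "xs \<in> mrel G j"
      have "app_tuple \<phi> (sig ! j) xs \<in> mrel H j" using \<phi> j unfolding ihoms_def mhom_def by blast
      moreover have "\<forall>t<length xs. \<phi> (sig!j!t) (xs!t) \<in> msort (fix_sub k sig H \<pi>) (sig ! j ! t)"
        using tup_coord[OF SO G j] fixed mH by (simp add: fix_sort)
      ultimately show "app_tuple \<phi> (sig ! j) xs \<in> mrel (fix_sub k sig H \<pi>) j"
        using j by (subst fix_rel) simp
    qed
    show "\<phi> \<in> ihoms k sig G (fix_sub k sig H \<pi>)"
      using P' hm \<phi> by (simp add: ihoms_def)
  next
    fix \<phi> assume \<phi>: "\<phi> \<in> ihoms k sig G (fix_sub k sig H \<pi>)"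
    have sub: "msort (fix_sub k sig H \<pi>) i \<subseteq> msort H i" for i by (auto simp: fix_sort)
    have rsub: "mrel (fix_sub k sig H \<pi>) j \<subseteq> mrel H j" for j by (subst fix_rel) auto
    have "\<phi> \<in> ?X"
      using \<phi> sub rsub unfolding ihoms_def mhom_def by (auto simp: PiE_iff) blast+
    moreover have "?F \<phi> = \<phi>"
    proof (rule ihoms_ext[OF _ \<phi>])
      show "?F \<phi> \<in> ?X" using cl \<open>\<phi> \<in> ?X\<close> by blast
      fix i a assume "i<k" "a \<in> msort G i"
      thus "?F \<phi> i a = \<phi> i a" using ihoms_maps[OF \<phi>] by (simp add: fix_sort)
    qed
    ultimately show "\<phi> \<in> {\<phi>\<in>?X. ?F \<phi> = \<phi>}" by simp
  qed
  have "card ?X mod p = card {\<phi>\<in>?X. ?F \<phi> = \<phi>} mod p"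
    by (rule orbit_mod[OF finite_ihoms[OF G H] cl _ p]) (use per in blast)
  thus ?thesis using fixset by simp
qed


lemma finite_tuples:
  assumes H: "mwf k sig H" and ty: "ty \<in> set sig"
  shows "finite (tuples_of H ty)"
proof -
  have fin: "finite (\<Union>i\<in>set ty. msort H i)"
    using H ty SO unfolding mwf_def sig_ok_def by auto
  have "tuples_of H ty \<subseteq> {xs. set xs \<subseteq> (\<Union>i\<in>set ty. msort H i) \<and> length xs = length ty}"
    unfolding tuples_of_def by (auto simp: in_set_conv_nth) (metis nth_mem)
  thus ?thesis using finite_lists_length_eq[OF fin] finite_subset by blast
qed

lemma iso_of_injs:
  assumes G: "mwf k sig G" and H: "mwf k sig H" and f: "f \<in> ihoms k sig G H" and g: "g \<in> ihoms k sig H G"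
  shows "miso_via k sig G H f"
proof -
  have fhom: "mhom k sig G H f" and finj: "\<forall>i<k. inj_on (f i) (msort G i)"
    using f by (auto simp: ihoms_def)
  have ghom: "mhom k sig H G g" and ginj: "\<forall>i<k. inj_on (g i) (msort H i)"
    using g by (auto simp: ihoms_def)
  have bij: "bij_betw (f i) (msort G i) (msort H i)" if i: "i<k" for i
  proof -
    have fG: "finite (msort G i)" and fH: "finite (msort H i)" using G H i unfolding mwf_def by auto
    have im: "f i ` msort G i \<subseteq> msort H i" using ihoms_maps[OF f i] by blast
    have im2: "g i ` msort H i \<subseteq> msort G i" using ihoms_maps[OF g i] by blast
    have c1: "card (msort G i) \<le> card (msort H i)" using card_inj_on_le[OF _ im fH] finj i by blast
    have c2: "card (msort H i) \<le> card (msort G i)" using card_inj_on_le[OF _ im2 fG] ginj i by blast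
    have "card (f i ` msort G i) = card (msort H i)" using card_image finj i c1 c2 by fastforce
    hence "f i ` msort G i = msort H i" using card_subset_eq[OF fH im] by blast
    thus ?thesis using finj i by (simp add: bij_betw_def)
  qed
  define \<chi> where "\<chi> = (\<lambda>i. inv_into (msort G i) (f i))"
  have lf: "\<chi> i (f i a) = a" if "i<k" "a \<in> msort G i" for i a
    unfolding \<chi>_def using finj that by (simp add: inv_into_f_f)
  have ihom: "mhom k sig H G \<chi>"
    unfolding mhom_def
  proof (intro conjI allI impI ballI)
    fix i b assume "i<k" "b \<in> msort H i"
    thus "\<chi> i b \<in> msort G i" unfolding \<chi>_def using bij by (metis bij_betw_def inv_into_into)
  next
    fix j ys assume j: "j < length sig" and ys: "ys \<in> mrel H j"
    let ?T = "app_tuple f (sig!j)"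
    have injT: "inj_on ?T (mrel G j)"
    proof (rule inj_onI)
      fix xs zs assume xs: "xs \<in> mrel G j" and zs: "zs \<in> mrel G j" and e: "?T xs = ?T zs"
      have L: "length xs = length zs" using e by (metis app_tuple_length)
      show "xs = zs"
      proof (rule nth_equalityI[OF L])
        fix t assume t: "t < length xs"
        have "f (sig!j!t) (xs!t) = f (sig!j!t) (zs!t)"
          using arg_cong[OF e, of "\<lambda>l. l!t"] t L by simp
        moreover have t': "t < length zs" using t L by simp
        ultimately show "xs!t = zs!t"
          using inj_onD[OF finj[rule_format, OF tup_coord(1)[OF SO G j xs t]]]
            tup_coord(2)[OF SO G j xs t] tup_coord(2)[OF SO G j zs t'] by blast
      qed
    qed
    have injT2: "inj_on (app_tuple g (sig!j)) (mrel H j)"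
    proof (rule inj_onI)
      fix xs zs assume xs: "xs \<in> mrel H j" and zs: "zs \<in> mrel H j" and e: "app_tuple g (sig!j) xs = app_tuple g (sig!j) zs"
      have L: "length xs = length zs" using e by (metis app_tuple_length)
      show "xs = zs"
      proof (rule nth_equalityI[OF L])
        fix t assume t: "t < length xs"
        have "g (sig!j!t) (xs!t) = g (sig!j!t) (zs!t)"
          using arg_cong[OF e, of "\<lambda>l. l!t"] t L by simp
        moreover have t': "t < length zs" using t L by simp
        ultimately show "xs!t = zs!t"
          using inj_onD[OF ginj[rule_format, OF tup_coord(1)[OF SO H j xs t]]]
            tup_coord(2)[OF SO H j xs t] tup_coord(2)[OF SO H j zs t'] by blast
      qed
    qed
    have sj: "sig!j \<in> set sig" using j by simp
    have finG: "finite (mrel G j)" using finite_tuples[OF G sj] G j unfolding mwf_def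
      by (meson finite_subset)
    have finH: "finite (mrel H j)" using finite_tuples[OF H sj] H j unfolding mwf_def
      by (meson finite_subset)
    have imT: "?T ` mrel G j \<subseteq> mrel H j" using fhom j unfolding mhom_def by blast
    have imT2: "app_tuple g (sig!j) ` mrel H j \<subseteq> mrel G j" using ghom j unfolding mhom_def by blast
    have "card (mrel G j) \<le> card (mrel H j)" using card_inj_on_le[OF injT imT finH] .
    moreover have "card (mrel H j) \<le> card (mrel G j)" using card_inj_on_le[OF injT2 imT2 finG] .
    ultimately have "card (?T ` mrel G j) = card (mrel H j)" using card_image[OF injT] by simp
    hence "?T ` mrel G j = mrel H j" using card_subset_eq[OF finH imT] by blast
    then obtain xs where xs: "xs \<in> mrel G j" "ys = ?T xs" using ys by blast
    have "app_tuple \<chi> (sig!j) ys = xs"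
      unfolding xs(2) app_tuple_comp
      by (rule nth_equalityI) (use tup_coord[OF SO G j xs(1)] lf in auto)
    thus "app_tuple \<chi> (sig ! j) ys \<in> mrel G j" using xs by simp
  qed
  show ?thesis unfolding miso_via_def using fhom bij ihom \<chi>_def by auto
qed

lemma id_ihoms:
  assumes G: "mwf k sig G"
  shows "(\<lambda>i\<in>{..<k}. \<lambda>a\<in>msort G i. a) \<in> ihoms k sig G G"
proof -
  have "mhom k sig G G (\<lambda>i a. a)" unfolding mhom_def
  proof (intro conjI allI impI ballI)
    fix j xs assume "j < length sig" "xs \<in> mrel G j"
    moreover have "app_tuple (\<lambda>i a. a) (sig!j) xs = xs" by (rule nth_equalityI) auto
    ultimately show "app_tuple (\<lambda>i a. a) (sig ! j) xs \<in> mrel G j" by simp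
  qed simp
  hence "mhom k sig G G (\<lambda>i\<in>{..<k}. \<lambda>a\<in>msort G i. a)"
    by (rule mhom_cong[OF SO G, rotated]) simp
  moreover have "inj_on (\<lambda>a\<in>msort G i. a) (msort G i)" for i
    by (simp add: inj_on_def)
  ultimately show ?thesis unfolding ihoms_def by (auto simp: PiE_iff)
qed

lemma miso_refl:
  assumes G: "mwf k sig G"
  shows "miso k sig G G"
  using iso_of_injs[OF G G id_ihoms[OF G] id_ihoms[OF G]] unfolding miso_def by blast


lemma autG_group:
  assumes H: "mwf k sig H"
  shows "group (autG k sig H)"
proof (rule groupI)
  let ?A = "autG k sig H"
  have car: "carrier ?A = ihoms k sig H H" by (simp add: autG_def)
  have mul: "x \<otimes>\<^bsub>?A\<^esub> y = rcomp k H x y" for x y by (simp add: autG_def)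
  have one: "\<one>\<^bsub>?A\<^esub> = (\<lambda>i\<in>{..<k}. \<lambda>a\<in>msort H i. a)" by (simp add: autG_def)
  have hominj: "mhom k sig H H x \<and> (\<forall>i<k. inj_on (x i) (msort H i))" if "x \<in> ihoms k sig H H" for x
    using that by (simp add: ihoms_def)
  show "x \<otimes>\<^bsub>?A\<^esub> y \<in> carrier ?A" if "x \<in> carrier ?A" "y \<in> carrier ?A" for x y
    using that unfolding car mul using ihoms_comp[OF SO H] hominj by blast
  show "\<one>\<^bsub>?A\<^esub> \<in> carrier ?A" unfolding one car by (rule id_ihoms[OF H])
  show "x \<otimes>\<^bsub>?A\<^esub> y \<otimes>\<^bsub>?A\<^esub> z = x \<otimes>\<^bsub>?A\<^esub> (y \<otimes>\<^bsub>?A\<^esub> z)"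
    if "x \<in> carrier ?A" "y \<in> carrier ?A" "z \<in> carrier ?A" for x y z
    unfolding mul using that unfolding car
    by (auto simp: rcomp_def fun_eq_iff ihoms_maps)
  show "\<one>\<^bsub>?A\<^esub> \<otimes>\<^bsub>?A\<^esub> x = x" if "x \<in> carrier ?A" for x
  proof -
    have x: "x \<in> ihoms k sig H H" using that car by simp
    have c: "rcomp k H (\<lambda>i\<in>{..<k}. \<lambda>a\<in>msort H i. a) x \<in> ihoms k sig H H"
      using ihoms_comp[OF SO H x] hominj[OF id_ihoms[OF H]] by blast
    show ?thesis unfolding mul one
      by (rule ihoms_ext[OF c x]) (simp add: ihoms_maps[OF x])
  qed
  show "\<exists>y\<in>carrier ?A. y \<otimes>\<^bsub>?A\<^esub> x = \<one>\<^bsub>?A\<^esub>" if "x \<in> carrier ?A" for x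
  proof -
    have x: "x \<in> ihoms k sig H H" using that car by simp
    have iso: "miso_via k sig H H x" by (rule iso_of_injs[OF H H x x])
    define y where "y = (\<lambda>i\<in>{..<k}. \<lambda>a\<in>msort H i. inv_into (msort H i) (x i) a)"
    have bij: "bij_betw (x i) (msort H i) (msort H i)" if "i<k" for i
      using iso that unfolding miso_via_def by blast
    have ih: "mhom k sig H H (\<lambda>i. inv_into (msort H i) (x i))" using iso unfolding miso_via_def by blast
    have yh: "mhom k sig H H y" unfolding y_def by (rule mhom_cong[OF SO H _ ih]) simp
    have yP: "y \<in> PiE {..<k} (\<lambda>i. PiE (msort H i) (\<lambda>a. msort H i))"
      unfolding y_def using bij by (auto simp: PiE_iff bij_betw_def inv_into_into)
    have yi: "inj_on (y i) (msort H i)" if "i<k" for i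
    proof -
      have "inj_on (inv_into (msort H i) (x i)) (msort H i)"
        using bij[OF that] by (metis bij_betw_def inj_on_inv_into order_refl)
      thus ?thesis unfolding y_def using that by (simp add: inj_on_def)
    qed
    have yc: "y \<in> ihoms k sig H H" using yP yh yi by (simp add: ihoms_def)
    have "rcomp k H y x = (\<lambda>i\<in>{..<k}. \<lambda>a\<in>msort H i. a)"
    proof (rule ihoms_ext[OF _ id_ihoms[OF H]])
      show "rcomp k H y x \<in> ihoms k sig H H" using ihoms_comp[OF SO H x] hominj[OF yc] by blast
      fix i a assume "i<k" "a \<in> msort H i"
      thus "rcomp k H y x i a = (\<lambda>i\<in>{..<k}. \<lambda>a\<in>msort H i. a) i a"
        using bij ihoms_maps[OF x] unfolding y_def by (simp add: bij_betw_def inv_into_f_f)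
    qed
    thus ?thesis using yc unfolding car mul one by blast
  qed
qed


lemma autG_pow:
  assumes H: "mwf k sig H" and x: "x \<in> ihoms k sig H H"
  shows "x [^]\<^bsub>autG k sig H\<^esub> (n::nat) = (\<lambda>i\<in>{..<k}. \<lambda>a\<in>msort H i. (x i ^^ n) a)"
proof (induction n)
  case 0 thus ?case by (simp add: autG_def restrict_def)
next
  case (Suc n)
  have "x [^]\<^bsub>autG k sig H\<^esub> Suc n = rcomp k H (x [^]\<^bsub>autG k sig H\<^esub> n) x"
    by (simp add: autG_def)
  also have "\<dots> = (\<lambda>i\<in>{..<k}. \<lambda>a\<in>msort H i. (x i ^^ Suc n) a)"
    unfolding Suc using ihoms_maps[OF x]
    by (auto simp: rcomp_def fun_eq_iff funpow_swap1)
  finally show ?case .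
qed

lemma rigid_not_dvd:
  assumes H: "mwf k sig H" and p: "prime p" and R: "p_rigid k sig p H"
  shows "\<not> p dvd card (ihoms k sig H H)"
proof
  assume d: "p dvd card (ihoms k sig H H)"
  let ?A = "autG k sig H"
  have grp: "group ?A" by (rule autG_group[OF H])
  have car: "carrier ?A = ihoms k sig H H" by (simp add: autG_def)
  have fin: "finite (carrier ?A)" using finite_ihoms[OF H H] car by simp
  have "order ?A = p^1 * (order ?A div p)" using d by (simp add: order_def car)
  from sylow_thm[OF p grp this fin] obtain S where S: "subgroup S ?A" "card S = p" by auto
  have p2: "2 \<le> p" using p prime_ge_2_nat by blast
  obtain x where x: "x \<in> S" "x \<noteq> \<one>\<^bsub>?A\<^esub>"
  proof (rule ccontr)
    assume "\<not> thesis"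
    hence "S \<subseteq> {\<one>\<^bsub>?A\<^esub>}" using that by blast
    hence "card S \<le> 1" using card_mono[of "{\<one>\<^bsub>?A\<^esub>}" S] by simp
    thus False using S(2) p2 by simp
  qed
  have xc: "x \<in> ihoms k sig H H" using subgroup.mem_carrier[OF S(1) x(1)] car by simp
  have gS: "group (?A\<lparr>carrier := S\<rparr>)" by (rule subgroup.subgroup_is_group[OF S(1) grp])
  have "x [^]\<^bsub>?A\<lparr>carrier := S\<rparr>\<^esub> (order (?A\<lparr>carrier := S\<rparr>)) = \<one>\<^bsub>?A\<lparr>carrier := S\<rparr>\<^esub>"
    by (rule group.pow_order_eq_1[OF gS]) (simp add: x)
  moreover have "order (?A\<lparr>carrier := S\<rparr>) = p" using S(2) by (simp add: order_def)
  moreover have "x [^]\<^bsub>?A\<lparr>carrier := S\<rparr>\<^esub> p = x [^]\<^bsub>?A\<^esub> p"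
    using monoid.nat_pow_consistent[OF group.is_monoid[OF grp]] by metis
  ultimately have xp: "x [^]\<^bsub>?A\<^esub> p = \<one>\<^bsub>?A\<^esub>" by simp
  have xpa: "(x i ^^ p) a = a" if "i<k" "a \<in> msort H i" for i a
    using fun_cong[OF fun_cong[OF xp, of i], of a] that unfolding autG_pow[OF H xc]
    by (simp add: autG_def)
  have mo: "mauto_order k sig p H x"
    unfolding mauto_order_def
  proof (intro conjI allI impI)
    show "mauto k sig H x" unfolding mauto_def by (rule iso_of_injs[OF H H xc xc])
  next
    fix i assume i: "i<k"
    show "is_id_on (x i) (msort H i) \<or> perm_order_on (x i) (msort H i) = p"
    proof (cases "is_id_on (x i) (msort H i)")
      case True thus ?thesis by simp
    next
      case False
      have "(LEAST n. 0 < n \<and> is_id_on (x i ^^ n) (msort H i)) = p"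
      proof (rule period_least[OF p])
        show "is_id_on (x i ^^ p) (msort H i)" using xpa i by (simp add: is_id_on_def)
        show "\<not> is_id_on (x i ^^ 1) (msort H i)" using False by simp
        show "\<forall>a b. is_id_on (x i ^^ a) (msort H i) \<longrightarrow> is_id_on (x i ^^ b) (msort H i) \<longrightarrow>
                is_id_on (x i ^^ (a + b)) (msort H i)"
          by (simp add: is_id_on_def funpow_add)
        show "\<forall>a b. is_id_on (x i ^^ a) (msort H i) \<longrightarrow> is_id_on (x i ^^ (a + b)) (msort H i) \<longrightarrow>
                is_id_on (x i ^^ b) (msort H i)"
          unfolding is_id_on_def by (metis add.commute comp_apply funpow_add)
      qed
      thus ?thesis unfolding perm_order_on_def by simp
    qed
  next
    show "\<exists>i<k. \<not> is_id_on (x i) (msort H i)"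
    proof (rule ccontr)
      assume "\<not> ?thesis"
      hence all: "\<forall>i<k. is_id_on (x i) (msort H i)" by blast
      have "x = (\<lambda>i\<in>{..<k}. \<lambda>a\<in>msort H i. a)"
        by (rule ihoms_ext[OF xc id_ihoms[OF H]]) (use all in \<open>simp add: is_id_on_def\<close>)
      thus False using x(2) by (simp add: autG_def)
    qed
  qed
  thus False using R unfolding p_rigid_def by blast
qed


lemma preach_mod:
  fixes G :: "'c mstruct" and H :: "'a mstruct" and H1 :: "'b mstruct"
  assumes G: "mwf k sig G" and p: "prime p" and R: "preach k sig p H H1"
  shows "card (ihoms k sig G H) mod p = card (ihoms k sig G H1) mod p"
proof -
  obtain hs :: "'a mstruct list" where hs: "hs \<noteq> []" "\<forall>G\<in>set hs. mwf k sig G" "miso k sig (hd hs) H"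
     "miso k sig (last hs) H1" "\<forall>i. Suc i < length hs \<longrightarrow> pstep k sig p (hs!i) (hs!Suc i)"
    using R unfolding preach_def by blast
  have step: "card (ihoms k sig G (hs!i)) mod p = card (ihoms k sig G (hs!0)) mod p"
    if "i < length hs" for i
    using that
  proof (induction i)
    case 0 thus ?case by simp
  next
    case (Suc i)
    have "pstep k sig p (hs!i) (hs!Suc i)" using hs(5) Suc.prems by blast
    then obtain \<pi> \<psi> where A: "mauto_order k sig p (hs!i) \<pi>"
      and I: "miso_via k sig (hs!Suc i) (fix_sub k sig (hs!i) \<pi>) \<psi>"
      unfolding pstep_def miso_def by blast
    have mi: "mwf k sig (hs!i)" using hs(2) Suc.prems by simp
    have "card (ihoms k sig G (hs!Suc i)) = card (ihoms k sig G (fix_sub k sig (hs!i) \<pi>))"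
      by (rule card_ihoms_iso[OF G I])
    also have "\<dots> mod p = card (ihoms k sig G (hs!i)) mod p"
      using card_ihoms_fix[OF G mi p A] by simp
    finally show ?case using Suc by simp
  qed
  obtain \<psi>1 where I1: "miso_via k sig (hd hs) H \<psi>1" using hs(3) unfolding miso_def by blast
  obtain \<psi>2 where I2: "miso_via k sig (last hs) H1 \<psi>2" using hs(4) unfolding miso_def by blast
  have "card (ihoms k sig G H) = card (ihoms k sig G (hs!0))"
    using card_ihoms_iso[OF G I1] hs(1) by (simp add: hd_conv_nth)
  moreover have "card (ihoms k sig G H1) = card (ihoms k sig G (hs!(length hs - 1)))"
    using card_ihoms_iso[OF G I2] hs(1) by (simp add: last_conv_nth)
  moreover have "length hs - 1 < length hs" using hs(1) by simp
  ultimately show ?thesis using step by metis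
qed

lemma exists_chain:
  assumes p: "prime p"
  shows "mwf k sig H \<Longrightarrow> \<exists>hs. hs \<noteq> [] \<and> hd hs = H \<and> (\<forall>G\<in>set hs. mwf k sig G) \<and>
      p_rigid k sig p (last hs) \<and> (\<forall>i. Suc i < length hs \<longrightarrow> pstep k sig p (hs!i) (hs!Suc i))"
proof (induction "\<Sum>i<k. card (msort H i)" arbitrary: H rule: less_induct)
  case less
  show ?case
  proof (cases "p_rigid k sig p H")
    case True thus ?thesis using less.prems by (intro exI[of _ "[H]"]) simp
  next
    case False
    then obtain \<pi> where A: "mauto_order k sig p H \<pi>" unfolding p_rigid_def by blast
    let ?H' = "fix_sub k sig H \<pi>"
    have mw: "mwf k sig ?H'" by (rule mwf_fix_sub[OF less.prems])
    have "(\<Sum>i<k. card (msort ?H' i)) < (\<Sum>i<k. card (msort H i))"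
    proof (rule sum_strict_mono_ex1)
      show "\<forall>i\<in>{..<k}. card (msort ?H' i) \<le> card (msort H i)"
        using less.prems unfolding mwf_def by (auto intro!: card_mono simp: fix_sort)
      obtain i where i: "i<k" "\<not> is_id_on (\<pi> i) (msort H i)" using A unfolding mauto_order_def by blast
      then obtain a where a: "a \<in> msort H i" "\<pi> i a \<noteq> a" unfolding is_id_on_def by blast
      have "msort ?H' i \<subset> msort H i" using i a by (auto simp: fix_sort)
      moreover have "finite (msort H i)" using less.prems i unfolding mwf_def by blast
      ultimately have "card (msort ?H' i) < card (msort H i)" by (rule psubset_card_mono[rotated])
      thus "\<exists>i\<in>{..<k}. card (msort ?H' i) < card (msort H i)" using i by blast
    qed simp
    from less.hyps[OF this mw] obtain hs where hs: "hs \<noteq> []" "hd hs = ?H'" "\<forall>G\<in>set hs. mwf k sig G"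
      "p_rigid k sig p (last hs)" "\<forall>i. Suc i < length hs \<longrightarrow> pstep k sig p (hs!i) (hs!Suc i)" by blast
    have ps0: "pstep k sig p H ?H'" unfolding pstep_def using A miso_refl[OF mw] by blast
    have "\<forall>i. Suc i < length (H#hs) \<longrightarrow> pstep k sig p ((H#hs)!i) ((H#hs)!Suc i)"
    proof (intro allI impI)
      fix i assume i: "Suc i < length (H#hs)"
      show "pstep k sig p ((H#hs)!i) ((H#hs)!Suc i)"
      proof (cases i)
        case 0 thus ?thesis using ps0 hs(1,2) by (simp add: hd_conv_nth)
      next
        case (Suc j) thus ?thesis using hs(5) i by simp
      qed
    qed
    thus ?thesis using hs less.prems by (intro exI[of _ "H#hs"]) simp
  qed
qed

end

theorem proposition2p1:
  fixes k :: nat and sig :: "nat list list" and p :: nat and H :: "'a mstruct"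
  assumes "sig_ok k sig" and "prime p" and "mwf k sig H"
  shows "(\<exists>Hs :: 'a mstruct. mwf k sig Hs \<and> p_rigid k sig p Hs \<and> preach k sig p H Hs) \<and>
         (\<forall>(H1 :: 'b mstruct) (H2 :: 'c mstruct).
            mwf k sig H1 \<and> p_rigid k sig p H1 \<and> preach k sig p H H1 \<and>
            mwf k sig H2 \<and> p_rigid k sig p H2 \<and> preach k sig p H H2 \<longrightarrow> miso k sig H1 H2)"
proof
  note SO = assms(1)
  obtain hs where hs: "hs \<noteq> []" "hd hs = H" "\<forall>G\<in>set hs. mwf k sig G"
      "p_rigid k sig p (last hs)" "\<forall>i. Suc i < length hs \<longrightarrow> pstep k sig p (hs!i) (hs!Suc i)"
    using exists_chain[OF SO assms(2,3)] by blast
  have ml: "mwf k sig (last hs)" using hs(1,3) by simp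
  have "preach k sig p H (last hs)"
    unfolding preach_def using hs miso_refl[OF SO assms(3)] miso_refl[OF SO ml]
    by (intro exI[of _ hs]) simp
  thus "\<exists>Hs :: 'a mstruct. mwf k sig Hs \<and> p_rigid k sig p Hs \<and> preach k sig p H Hs"
    using ml hs(4) by blast
next
  note SO = assms(1) and p = assms(2)
  show "\<forall>(H1 :: 'b mstruct) (H2 :: 'c mstruct).
            mwf k sig H1 \<and> p_rigid k sig p H1 \<and> preach k sig p H H1 \<and>
            mwf k sig H2 \<and> p_rigid k sig p H2 \<and> preach k sig p H H2 \<longrightarrow> miso k sig H1 H2"
  proof (intro allI impI)
    fix H1 :: "'b mstruct" and H2 :: "'c mstruct"
    assume a: "mwf k sig H1 \<and> p_rigid k sig p H1 \<and> preach k sig p H H1 \<and>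
            mwf k sig H2 \<and> p_rigid k sig p H2 \<and> preach k sig p H H2"
    hence m1: "mwf k sig H1" and r1: "p_rigid k sig p H1" and c1: "preach k sig p H H1"
      and m2: "mwf k sig H2" and r2: "p_rigid k sig p H2" and c2: "preach k sig p H H2" by auto
    have e1: "card (ihoms k sig H1 H2) mod p = card (ihoms k sig H1 H1) mod p"
      using preach_mod[OF SO m1 p c1] preach_mod[OF SO m1 p c2] by simp
    have "card (ihoms k sig H1 H1) mod p \<noteq> 0"
      using rigid_not_dvd[OF SO m1 p r1] by (simp add: dvd_eq_mod_eq_0)
    hence "ihoms k sig H1 H2 \<noteq> {}" using e1 by auto
    then obtain f where f: "f \<in> ihoms k sig H1 H2" by blast
    have e2: "card (ihoms k sig H2 H1) mod p = card (ihoms k sig H2 H2) mod p"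
      using preach_mod[OF SO m2 p c1] preach_mod[OF SO m2 p c2] by simp
    have "card (ihoms k sig H2 H2) mod p \<noteq> 0"
      using rigid_not_dvd[OF SO m2 p r2] by (simp add: dvd_eq_mod_eq_0)
    hence "ihoms k sig H2 H1 \<noteq> {}" using e2 by auto
    then obtain g where g: "g \<in> ihoms k sig H2 H1" by blast
    show "miso k sig H1 H2" unfolding miso_def using iso_of_injs[OF SO m1 m2 f g] by blast
  qed
qed

end
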